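(* Let $\phi:\mathcal M_1\to\mathcal M_2$ be a homomorphism of local Moufang sets, $\mathcal M_1=(X,(U_x))$, $\mathcal M_2=(Y,(V_y))$. (i) For each $x\in X$ there is a unique map $\theta_x:U_x\to V_{x\phi}$ with $(zu)\phi=(z\phi)\theta_x(u)$ for all $z\in X$, $u\in U_x$, and $\theta_x$ is a group homomorphism. (ii) If $x\in X$, $u\in U_x$, $v\in V_{x\phi}$ and there is $x'\in X\setminus\overline x$ with $(x'u)\phi=(x'\phi)v$, then $v=\theta_x(u)$. Suppose moreover that bases $(0,\infty)$ of $X$ and $(0',\infty')$ of $Y$ are chosen with $0\phi=0'$, $\infty\phi=\infty'$. Then (iii) for $x\not\sim\infty$, $\theta_\infty(\alpha_x)=\alpha_{x\phi}$ and $(-x)\phi=-(x\phi)$; (iv) if $x$ is a unit then $x\phi$ is a unit, $\mu_x\phi=\phi\mu_{x\phi}$, and if $\mu_x=g\alpha_xh$ with $g,h\in U_0$ then $\mu_{x\phi}=\theta_0(g)\alpha_{x\phi}\theta_0(h)$; (v) if $x$ is a unit then $\tilde x\phi=\widetilde{x\phi}$, where $\tilde y:=-((-y)\mu_y)$; (vi) $H_1\phi\subseteq\phi H_2$, where $H_1,H_2$ are the Hua subgroups of $\mathcal M_1,\mathcal M_2$.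
   Context: Group actions are right actions; maps are composed left to right, so $u\phi$ means first $u$ then $\phi$. For $(X,\sim)$, $\overline x$ is the class of $x$, $\overline X$ the set of classes, $\mathrm{Sym}(X,\sim)$ the bijections $g$ with $x\sim y\iff xg\sim yg$, $\overline U$ the induced group on $\overline X$. A local Moufang set is $(X,\sim)$ with $|\overline X|>2$ and subgroups $U_x\le\mathrm{Sym}(X,\sim)$ ($x\in X$) with: (LM0) $x\sim y\Rightarrow\overline{U_x}=\overline{U_y}$; (LM1) $U_x$ fixes $x$ and is sharply transitive on $X\setminus\overline x$; (LM1') $\overline{U_x}$ fixes $\overline x$ and is sharply transitive on $\overline X\setminus\{\overline x\}$; (LM2) $U_x^g=U_{xg}$ for all $x$ and all $g\in G:=\langle U_y\rangle$, where $g^h=h^{-1}gh$. A homomorphism $\mathcal M_1=(X,(U_x))\to\mathcal M_2=(Y,(V_y))$ is a map $\phi:X\to Y$ such that $x\sim x'\iff x\phi\sim x'\phi$ for all $x,x'\in X$, and $U_x\phi\subseteq\phi V_{x\phi}$ for all $x$ (i.e. for every $u\in U_x$ there is $v\in V_{x\phi}$ with $u\phi=\phi v$). Given a basis $(0,\infty)$ (two inequivalent points): $\alpha_x$ ($x\not\sim\infty$) is the unique element of $U_\infty$ with $0\alpha_x=x$; $-x:=0\alpha_x^{-1}$; a unit is $x$ with $x\not\sim0,\infty$; $\mu_x$ is the unique element of $U_0\alpha_xU_0$ swapping $0,\infty$; the Hua subgroup is $H=\langle\mu_x\mu_y\mid x,y\text{ units}\rangle$. *)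

theory Defs
  imports "HOL-Library.FuncSet"
begin

text \<open>The point set X of a local Moufang set is represented by a type 'a
  (X = UNIV); the equivalence is sim.
  Groups act on the right: x g is written g x, and the product g h ("first g, then h")
  is the function h \<circ> g.\<close>

definition cls :: "('a \<Rightarrow> 'a \<Rightarrow> bool) \<Rightarrow> 'a \<Rightarrow> 'a set" where
  "cls sim x = {y. sim x y}"

definition classes :: "('a \<Rightarrow> 'a \<Rightarrow> bool) \<Rightarrow> 'a set set" where
  "classes sim = range (cls sim)"

definition SymRel :: "('a \<Rightarrow> 'a \<Rightarrow> bool) \<Rightarrow> ('a \<Rightarrow> 'a) set" where
  "SymRel sim = {g. bij g \<and> (\<forall>x y. sim x y \<longleftrightarrow> sim (g x) (g y))}"

definition ind :: "('a \<Rightarrow> 'a \<Rightarrow> bool) \<Rightarrow> ('a \<Rightarrow> 'a) \<Rightarrow> ('a set \<Rightarrow> 'a set)" where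
  "ind sim g = restrict (\<lambda>C. g ` C) (classes sim)"

definition perm_subgroup :: "('a \<Rightarrow> 'a) set \<Rightarrow> bool" where
  "perm_subgroup S \<longleftrightarrow> (\<forall>g\<in>S. bij g) \<and> id \<in> S \<and>
     (\<forall>g\<in>S. \<forall>h\<in>S. h \<circ> g \<in> S) \<and> (\<forall>g\<in>S. inv g \<in> S)"

inductive_set gen :: "('a \<Rightarrow> 'a) set \<Rightarrow> ('a \<Rightarrow> 'a) set" for S where
  gen_id: "id \<in> gen S"
| gen_base: "g \<in> S \<Longrightarrow> g \<in> gen S"
| gen_mult: "g \<in> gen S \<Longrightarrow> h \<in> gen S \<Longrightarrow> h \<circ> g \<in> gen S"
| gen_inv: "g \<in> gen S \<Longrightarrow> inv g \<in> gen S"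

definition local_moufang :: "('a \<Rightarrow> 'a \<Rightarrow> bool) \<Rightarrow> ('a \<Rightarrow> ('a \<Rightarrow> 'a) set) \<Rightarrow> bool" where
  "local_moufang sim U \<longleftrightarrow>
     equivp sim \<and>
     \<not> (finite (classes sim) \<and> card (classes sim) \<le> 2) \<and>
     (\<forall>x. perm_subgroup (U x) \<and> U x \<subseteq> SymRel sim) \<and>
     \<comment> \<open>LM0\<close>
     (\<forall>x y. sim x y \<longrightarrow> ind sim ` U x = ind sim ` U y) \<and>
     \<comment> \<open>LM1\<close>
     (\<forall>x. (\<forall>u\<in>U x. u x = x) \<and>
          (\<forall>y z. y \<notin> cls sim x \<longrightarrow> z \<notin> cls sim x \<longrightarrow> (\<exists>!u. u \<in> U x \<and> u y = z))) \<and>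
     \<comment> \<open>LM1'\<close>
     (\<forall>x. (\<forall>f\<in>ind sim ` U x. f (cls sim x) = cls sim x) \<and>
          (\<forall>C\<in>classes sim. \<forall>D\<in>classes sim. C \<noteq> cls sim x \<longrightarrow> D \<noteq> cls sim x \<longrightarrow>
              (\<exists>!f. f \<in> ind sim ` U x \<and> f C = D))) \<and>
     \<comment> \<open>LM2\<close>
     (\<forall>x. \<forall>g\<in>gen (\<Union>y. U y). (\<lambda>u. g \<circ> u \<circ> inv g) ` U x = U (g x))"

text \<open>Homomorphism of local Moufang sets: u phi = phi v means phi \<circ> u = v \<circ> phi.\<close>
definition lm_hom :: "('a \<Rightarrow> 'a \<Rightarrow> bool) \<Rightarrow> ('a \<Rightarrow> ('a \<Rightarrow> 'a) set) \<Rightarrow>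
    ('b \<Rightarrow> 'b \<Rightarrow> bool) \<Rightarrow> ('b \<Rightarrow> ('b \<Rightarrow> 'b) set) \<Rightarrow> ('a \<Rightarrow> 'b) \<Rightarrow> bool" where
  "lm_hom sim1 U sim2 V phi \<longleftrightarrow>
     local_moufang sim1 U \<and> local_moufang sim2 V \<and>
     (\<forall>x x'. sim1 x x' \<longleftrightarrow> sim2 (phi x) (phi x')) \<and>
     (\<forall>x. \<forall>u\<in>U x. \<exists>v\<in>V (phi x). phi \<circ> u = v \<circ> phi)"

definition theta_prop :: "('a \<Rightarrow> ('a \<Rightarrow> 'a) set) \<Rightarrow> ('b \<Rightarrow> ('b \<Rightarrow> 'b) set) \<Rightarrow> ('a \<Rightarrow> 'b) \<Rightarrow> 'a
    \<Rightarrow> (('a \<Rightarrow> 'a) \<Rightarrow> ('b \<Rightarrow> 'b)) \<Rightarrow> bool" where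
  "theta_prop U V phi x th \<longleftrightarrow> th \<in> U x \<rightarrow>\<^sub>E V (phi x) \<and>
     (\<forall>z. \<forall>u\<in>U x. phi (u z) = th u (phi z))"

definition theta :: "('a \<Rightarrow> ('a \<Rightarrow> 'a) set) \<Rightarrow> ('b \<Rightarrow> ('b \<Rightarrow> 'b) set) \<Rightarrow> ('a \<Rightarrow> 'b) \<Rightarrow> 'a
    \<Rightarrow> (('a \<Rightarrow> 'a) \<Rightarrow> ('b \<Rightarrow> 'b))" where
  "theta U V phi x = (THE th. theta_prop U V phi x th)"

definition alpha :: "('a \<Rightarrow> ('a \<Rightarrow> 'a) set) \<Rightarrow> 'a \<Rightarrow> 'a \<Rightarrow> 'a \<Rightarrow> ('a \<Rightarrow> 'a)" where
  "alpha U p0 pinf x = (THE a. a \<in> U pinf \<and> a p0 = x)"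

definition neg :: "('a \<Rightarrow> ('a \<Rightarrow> 'a) set) \<Rightarrow> 'a \<Rightarrow> 'a \<Rightarrow> 'a \<Rightarrow> 'a" where
  "neg U p0 pinf x = inv (alpha U p0 pinf x) p0"

definition is_unit :: "('a \<Rightarrow> 'a \<Rightarrow> bool) \<Rightarrow> 'a \<Rightarrow> 'a \<Rightarrow> 'a \<Rightarrow> bool" where
  "is_unit sim p0 pinf x \<longleftrightarrow> \<not> sim x p0 \<and> \<not> sim x pinf"

text \<open>mu_x: the unique element of U_0 alpha_x U_0 (products g alpha_x h = h \<circ> alpha_x \<circ> g)
  swapping p0 and pinf\<close>
definition mu :: "('a \<Rightarrow> ('a \<Rightarrow> 'a) set) \<Rightarrow> 'a \<Rightarrow> 'a \<Rightarrow> 'a \<Rightarrow> ('a \<Rightarrow> 'a)" where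
  "mu U p0 pinf x = (THE m. (\<exists>g\<in>U p0. \<exists>h\<in>U p0. m = h \<circ> alpha U p0 pinf x \<circ> g) \<and>
      m p0 = pinf \<and> m pinf = p0)"

definition tilde :: "('a \<Rightarrow> ('a \<Rightarrow> 'a) set) \<Rightarrow> 'a \<Rightarrow> 'a \<Rightarrow> 'a \<Rightarrow> 'a" where
  "tilde U p0 pinf y = neg U p0 pinf (mu U p0 pinf y (neg U p0 pinf y))"

text \<open>Hua subgroup: generated by the products mu_x mu_y (= mu_y \<circ> mu_x)\<close>
definition hua :: "('a \<Rightarrow> 'a \<Rightarrow> bool) \<Rightarrow> ('a \<Rightarrow> ('a \<Rightarrow> 'a) set) \<Rightarrow> 'a \<Rightarrow> 'a \<Rightarrow> ('a \<Rightarrow> 'a) set" where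
  "hua sim U p0 pinf = gen {mu U p0 pinf y \<circ> mu U p0 pinf x | x y.
      is_unit sim p0 pinf x \<and> is_unit sim p0 pinf y}"

end

theory Submission
  imports Defs
begin

lemma lm_D: assumes "local_moufang sim U" shows "equivp sim" "perm_subgroup (U x)" "U x \<subseteq> SymRel sim"
   "\<forall>u\<in>U x. u x = x" "\<forall>y z. y \<notin> cls sim x \<longrightarrow> z \<notin> cls sim x \<longrightarrow> (\<exists>!u. u\<in>U x \<and> u y = z)"
   "\<not> (finite (classes sim) \<and> card (classes sim) \<le> 2)"
  using assms unfolding local_moufang_def
  apply -
  apply (erule conjE, assumption)
  apply (elim conjE, erule allE[where x=x], erule conjE, assumption)
  apply (elim conjE, erule allE[where x=x], erule conjE, assumption)
  apply (elim conjE, erule allE[where x=x], erule allE[where x=x], erule conjE, assumption)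
  apply (elim conjE, erule allE[where x=x], erule allE[where x=x], erule conjE, assumption)
  apply (elim conjE, assumption)
  done

lemma lm_equiv: "local_moufang sim U \<Longrightarrow> equivp sim"
  by (rule lm_D)

lemma lm_symm: "local_moufang sim U \<Longrightarrow> sim a b \<Longrightarrow> sim b a"
  by (rule equivp_symp[OF lm_equiv])

lemma lm_fix: "local_moufang sim U \<Longrightarrow> u \<in> U x \<Longrightarrow> u x = x"
  using lm_D(4)[of sim U x] by (rule bspec)

lemma lm_symrel: "local_moufang sim U \<Longrightarrow> u \<in> U x \<Longrightarrow> bij u \<and> (\<forall>a b. sim a b \<longleftrightarrow> sim (u a) (u b))"
proof -
  assume L: "local_moufang sim U" and u: "u \<in> U x"
  have "u \<in> SymRel sim" using lm_D(3)[OF L, of x] u by (rule subsetD)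
  thus ?thesis unfolding SymRel_def by (rule CollectD)
qed

lemma lm_bij: "local_moufang sim U \<Longrightarrow> u \<in> U x \<Longrightarrow> bij u"
  by (rule lm_symrel[THEN conjunct1])

lemma lm_pres: "local_moufang sim U \<Longrightarrow> u \<in> U x \<Longrightarrow> sim a b \<longleftrightarrow> sim (u a) (u b)"
  by (rule lm_symrel[THEN conjunct2, rule_format])

lemma lm_trans1: "local_moufang sim U \<Longrightarrow> \<not> sim x y \<Longrightarrow> \<not> sim x z \<Longrightarrow> \<exists>!u. u \<in> U x \<and> u y = z"
proof -
  assume L: "local_moufang sim U" and a: "\<not> sim x y" "\<not> sim x z"
  have "y \<notin> cls sim x" "z \<notin> cls sim x" using a by (simp_all add: cls_def)
  thus ?thesis by (rule lm_D(5)[OF L, rule_format])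
qed

lemma lm_grp: "local_moufang sim U \<Longrightarrow> perm_subgroup (U x)"
  by (rule lm_D)

lemma lm_comp: "local_moufang sim U \<Longrightarrow> u \<in> U x \<Longrightarrow> v \<in> U x \<Longrightarrow> v \<circ> u \<in> U x"
proof -
  assume "local_moufang sim U" "u \<in> U x" "v \<in> U x"
  thus ?thesis using lm_grp[of sim U x] unfolding perm_subgroup_def by simp
qed

lemma lm_other: assumes L: "local_moufang sim U" shows "\<exists>z. \<not> sim x z"
proof (rule ccontr)
  assume "\<not> (\<exists>z. \<not> sim x z)"
  hence all: "\<And>z. sim x z" by blast
  have eq: "\<forall>a b. sim a b = (sim a = sim b)" using lm_equiv[OF L] by (unfold equivp_def)
  have "\<And>z. cls sim z = cls sim x"
  proof -
    fix z have "sim x = sim z" using all[of z] eq by metis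
    thus "cls sim z = cls sim x" by (simp add: cls_def)
  qed
  hence "classes sim = {cls sim x}" unfolding classes_def by auto
  thus False using lm_D(6)[OF L] by simp
qed

lemma lm_unique:
  assumes L: "local_moufang sim U" and v1: "v1 \<in> U x" and v2: "v2 \<in> U x"
    and ny: "\<not> sim x y" and e: "v1 y = v2 y"
  shows "v1 = v2"
proof -
  have e1: "sim x y = sim (v1 x) (v1 y)" by (rule lm_pres[OF L v1])
  hence "sim x y = sim x (v1 y)" by (simp only: lm_fix[OF L v1])
  with ny have nv: "\<not> sim x (v1 y)" by (simp only: simp_thms)
  have "\<exists>!u. u \<in> U x \<and> u y = v1 y" by (rule lm_trans1[OF L ny nv])
  then obtain w where "w \<in> U x \<and> w y = v1 y" and
    U: "\<forall>u. u \<in> U x \<and> u y = v1 y \<longrightarrow> u = w" unfolding Ex1_def by (elim exE conjE) (rule that, rule conjI, assumption+)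
  have "v1 = w" using v1 by (intro U[rule_format] conjI refl)
  moreover have "v2 = w" using v2 e by (intro U[rule_format] conjI) simp_all
  ultimately show ?thesis by simp
qed

lemma hom_D: assumes h: "lm_hom sim1 U sim2 V phi"
  shows "local_moufang sim1 U" "local_moufang sim2 V"
    "sim1 a b \<longleftrightarrow> sim2 (phi a) (phi b)" "\<forall>u\<in>U x. \<exists>v\<in>V (phi x). phi \<circ> u = v \<circ> phi"
proof -
  note H = h[unfolded lm_hom_def]
  show "local_moufang sim1 U" by (rule H[THEN conjunct1])
  show "local_moufang sim2 V" by (rule H[THEN conjunct2, THEN conjunct1])
  show "sim1 a b \<longleftrightarrow> sim2 (phi a) (phi b)" by (rule H[THEN conjunct2, THEN conjunct2, THEN conjunct1, rule_format])
  show "\<forall>u\<in>U x. \<exists>v\<in>V (phi x). phi \<circ> u = v \<circ> phi" by (rule H[THEN conjunct2, THEN conjunct2, THEN conjunct2, THEN spec])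
qed

lemma hom_sim: "lm_hom sim1 U sim2 V phi \<Longrightarrow> sim1 a b \<longleftrightarrow> sim2 (phi a) (phi b)"
  by (rule hom_D(3))

lemma hom_ex: "lm_hom sim1 U sim2 V phi \<Longrightarrow> u \<in> U x \<Longrightarrow> \<exists>v. v \<in> V (phi x) \<and> phi \<circ> u = v \<circ> phi"
proof -
  assume h: "lm_hom sim1 U sim2 V phi" and u: "u \<in> U x"
  from bspec[OF hom_D(4)[OF h, of x] u] obtain v where "v \<in> V (phi x)" "phi \<circ> u = v \<circ> phi" by (elim bexE) (rule that, assumption+)
  thus ?thesis by (intro exI conjI)
qed

lemma hom_L1: "lm_hom sim1 U sim2 V phi \<Longrightarrow> local_moufang sim1 U" by (rule hom_D(1))
lemma hom_L2: "lm_hom sim1 U sim2 V phi \<Longrightarrow> local_moufang sim2 V" by (rule hom_D(2))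

lemma theta_uniq:
  assumes hom: "lm_hom sim1 U sim2 V phi"
    and t1: "theta_prop U V phi x t1" and t2: "theta_prop U V phi x t2"
  shows "t1 = t2"
proof (rule ext)
  fix u
  have P1: "t1 \<in> U x \<rightarrow>\<^sub>E V (phi x)" and P2: "t2 \<in> U x \<rightarrow>\<^sub>E V (phi x)"
    using t1 t2 unfolding theta_prop_def by simp_all
  show "t1 u = t2 u"
  proof (cases "u \<in> U x")
    case True
    obtain z where z: "\<not> sim1 x z" using lm_other[OF hom_L1[OF hom], of x] by (elim exE) (rule that)
    hence nz: "\<not> sim2 (phi x) (phi z)" using hom_sim[OF hom, of x z] by simp
    have "t1 u (phi z) = phi (u z)" "t2 u (phi z) = phi (u z)"
      using t1 t2 True unfolding theta_prop_def by simp_all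
    thus ?thesis using lm_unique[OF hom_L2[OF hom] PiE_mem[OF P1 True] PiE_mem[OF P2 True] nz] by simp
  next
    case False
    thus ?thesis using PiE_arb[OF P1 False] PiE_arb[OF P2 False] by simp
  qed
qed

lemma theta_ex:
  assumes hom: "lm_hom sim1 U sim2 V phi"
  shows "\<exists>!th. theta_prop U V phi x th"
proof -
  define th where "th = restrict (\<lambda>u. SOME v. v \<in> V (phi x) \<and> phi \<circ> u = v \<circ> phi) (U x)"
  have sv: "th u \<in> V (phi x) \<and> phi \<circ> u = th u \<circ> phi" if u: "u \<in> U x" for u
  proof -
    have "\<exists>v. v \<in> V (phi x) \<and> phi \<circ> u = v \<circ> phi" using hom_ex[OF hom u] .
    from someI_ex[OF this] show ?thesis using u by (simp add: th_def)
  qed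
  have "theta_prop U V phi x th"
    unfolding theta_prop_def
  proof (intro conjI allI ballI)
    show "th \<in> U x \<rightarrow>\<^sub>E V (phi x)" unfolding th_def restrict_PiE_iff
      using sv unfolding th_def by simp
  next
    fix z u assume "u \<in> U x"
    from sv[OF this] have "phi \<circ> u = th u \<circ> phi" by (rule conjunct2)
    thus "phi (u z) = th u (phi z)" by (simp add: fun_eq_iff)
  qed
  moreover have "\<And>t. theta_prop U V phi x t \<Longrightarrow> t = th"
    using theta_uniq[OF hom] calculation by metis
  ultimately show ?thesis by (intro ex1I)
qed

lemma theta_prop_th: "lm_hom sim1 U sim2 V phi \<Longrightarrow> theta_prop U V phi x (theta U V phi x)"
proof -
  assume h: "lm_hom sim1 U sim2 V phi"
  show ?thesis unfolding theta_def by (rule theI'[OF theta_ex[OF h]])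
qed

lemma theta_mem: "lm_hom sim1 U sim2 V phi \<Longrightarrow> u \<in> U x \<Longrightarrow> theta U V phi x u \<in> V (phi x)"
proof -
  assume h: "lm_hom sim1 U sim2 V phi" and u: "u \<in> U x"
  have "theta U V phi x \<in> U x \<rightarrow>\<^sub>E V (phi x)" using theta_prop_th[OF h, of x] unfolding theta_prop_def by simp
  thus ?thesis using u by (rule PiE_mem)
qed

lemma theta_eq: "lm_hom sim1 U sim2 V phi \<Longrightarrow> u \<in> U x \<Longrightarrow> phi (u z) = theta U V phi x u (phi z)"
proof -
  assume h: "lm_hom sim1 U sim2 V phi" and u: "u \<in> U x"
  thus ?thesis using theta_prop_th[OF h, of x] unfolding theta_prop_def by simp
qed

lemma theta_char:
  assumes hom: "lm_hom sim1 U sim2 V phi" and u: "u \<in> U x" and v: "v \<in> V (phi x)"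
    and nx: "\<not> sim1 x x'" and e: "phi (u x') = v (phi x')"
  shows "v = theta U V phi x u"
proof -
  have n2: "\<not> sim2 (phi x) (phi x')" using hom_sim[OF hom, of x x'] nx by simp
  have "v (phi x') = theta U V phi x u (phi x')" using theta_eq[OF hom u, of x'] e by simp
  thus ?thesis by (rule lm_unique[OF hom_L2[OF hom] v theta_mem[OF hom u] n2])
qed

lemma theta_hom:
  assumes hom: "lm_hom sim1 U sim2 V phi" and u1: "u1 \<in> U x" and u2: "u2 \<in> U x"
  shows "theta U V phi x (u2 \<circ> u1) = theta U V phi x u2 \<circ> theta U V phi x u1"
proof -
  obtain z where z: "\<not> sim1 x z" using lm_other[OF hom_L1[OF hom], of x] by (elim exE) (rule that)
  have c: "u2 \<circ> u1 \<in> U x" using lm_comp[OF hom_L1[OF hom] u1 u2] .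
  have m: "theta U V phi x u2 \<circ> theta U V phi x u1 \<in> V (phi x)"
    using lm_comp[OF hom_L2[OF hom] theta_mem[OF hom u1] theta_mem[OF hom u2]] .
  have "phi ((u2 \<circ> u1) z) = (theta U V phi x u2 \<circ> theta U V phi x u1) (phi z)"
    using theta_eq[OF hom u1, of z] theta_eq[OF hom u2, of "u1 z"] by simp
  from theta_char[OF hom c m z this] show ?thesis by (rule sym)
qed

lemma lm_nsym: "local_moufang sim U \<Longrightarrow> \<not> sim a b \<Longrightarrow> \<not> sim b a"
  using lm_symm by metis

lemma lm_ex1: "local_moufang sim U \<Longrightarrow> \<not> sim x y \<Longrightarrow> \<not> sim x z \<Longrightarrow> \<exists>u. u \<in> U x \<and> u y = z"
  by (rule ex1_implies_ex, rule lm_trans1)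

lemma alpha_ex1:
  assumes L: "local_moufang sim U" and b: "\<not> sim p0 pinf" and x: "\<not> sim x pinf"
  shows "\<exists>!a. a \<in> U pinf \<and> a p0 = x"
  by (rule lm_trans1[OF L lm_nsym[OF L b] lm_nsym[OF L x]])

lemma alpha_prop:
  assumes L: "local_moufang sim U" and b: "\<not> sim p0 pinf" and x: "\<not> sim x pinf"
  shows "alpha U p0 pinf x \<in> U pinf \<and> alpha U p0 pinf x p0 = x"
  unfolding alpha_def by (rule theI'[OF alpha_ex1[OF L b x]])

lemma alpha_uniq:
  assumes L: "local_moufang sim U" and b: "\<not> sim p0 pinf" and x: "\<not> sim x pinf"
    and a: "a \<in> U pinf" and ap: "a p0 = x"
  shows "a = alpha U p0 pinf x"
proof -
  have "(THE a. a \<in> U pinf \<and> a p0 = x) = a"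
    by (rule the1_equality[OF alpha_ex1[OF L b x]], rule conjI[OF a ap])
  thus ?thesis unfolding alpha_def by (rule sym)
qed

lemma neg_alpha:
  assumes L: "local_moufang sim U" and b: "\<not> sim p0 pinf" and x: "\<not> sim x pinf"
  shows "alpha U p0 pinf x (neg U p0 pinf x) = p0"
proof -
  have "bij (alpha U p0 pinf x)" by (rule lm_bij[OF L alpha_prop[OF L b x, THEN conjunct1]])
  thus ?thesis unfolding neg_def by (simp add: bij_is_surj surj_f_inv_f)
qed

lemma neg_unit:
  assumes L: "local_moufang sim U" and b: "\<not> sim p0 pinf" and u: "is_unit sim p0 pinf x"
  shows "is_unit sim p0 pinf (neg U p0 pinf x)"
proof -
  have x0: "\<not> sim x p0" and xi: "\<not> sim x pinf" using u unfolding is_unit_def by simp_all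
  let ?a = "alpha U p0 pinf x"
  have aU: "?a \<in> U pinf" and ap: "?a p0 = x" using alpha_prop[OF L b xi] by simp_all
  have an: "?a (neg U p0 pinf x) = p0" by (rule neg_alpha[OF L b xi])
  have af: "?a pinf = pinf" by (rule lm_fix[OF L aU])
  have e1: "sim (neg U p0 pinf x) p0 = sim (?a (neg U p0 pinf x)) (?a p0)" by (rule lm_pres[OF L aU])
  have e2: "sim (neg U p0 pinf x) pinf = sim (?a (neg U p0 pinf x)) (?a pinf)" by (rule lm_pres[OF L aU])
  have "\<not> sim p0 x" by (rule lm_nsym[OF L x0])
  hence n1: "\<not> sim (neg U p0 pinf x) p0" using e1 an ap by simp
  have n2: "\<not> sim (neg U p0 pinf x) pinf" using e2 an af b by simp
  show ?thesis unfolding is_unit_def using n1 n2 by simp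
qed

definition MP :: "('a \<Rightarrow> ('a \<Rightarrow> 'a) set) \<Rightarrow> 'a \<Rightarrow> 'a \<Rightarrow> 'a \<Rightarrow> ('a \<Rightarrow> 'a) \<Rightarrow> bool" where
  "MP U p0 pinf x m \<longleftrightarrow> (\<exists>g\<in>U p0. \<exists>h\<in>U p0. m = h \<circ> alpha U p0 pinf x \<circ> g) \<and>
      m p0 = pinf \<and> m pinf = p0"

lemma mu_exists:
  assumes L: "local_moufang sim U" and b: "\<not> sim p0 pinf" and u: "is_unit sim p0 pinf x"
  shows "\<exists>m. MP U p0 pinf x m"
proof -
  have x0: "\<not> sim x p0" and xi: "\<not> sim x pinf" using u unfolding is_unit_def by simp_all
  let ?a = "alpha U p0 pinf x"
  let ?n = "neg U p0 pinf x"
  have aU: "?a \<in> U pinf" and ap: "?a p0 = x" using alpha_prop[OF L b xi] by simp_all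
  have an: "?a ?n = p0" by (rule neg_alpha[OF L b xi])
  have nu: "is_unit sim p0 pinf ?n" by (rule neg_unit[OF L b u])
  hence n0: "\<not> sim p0 ?n" unfolding is_unit_def using lm_nsym[OF L] by metis
  have x0': "\<not> sim p0 x" by (rule lm_nsym[OF L x0])
  obtain h where hU: "h \<in> U p0" and hx: "h x = pinf" using lm_ex1[OF L x0' b] by (elim exE conjE) (rule that)
  obtain g where gU: "g \<in> U p0" and gi: "g pinf = ?n" using lm_ex1[OF L b n0] by (elim exE conjE) (rule that)
  have g0: "g p0 = p0" by (rule lm_fix[OF L gU])
  have h0: "h p0 = p0" by (rule lm_fix[OF L hU])
  have "MP U p0 pinf x (h \<circ> ?a \<circ> g)"
    unfolding MP_def using hU gU hx gi g0 h0 an ap by auto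
  thus ?thesis by (rule exI[where x="h \<circ> ?a \<circ> g"])
qed

lemma mu_unique:
  assumes L: "local_moufang sim U" and b: "\<not> sim p0 pinf" and u: "is_unit sim p0 pinf x"
    and m1: "MP U p0 pinf x m1" and m2: "MP U p0 pinf x m2"
  shows "m1 = m2"
proof -
  have x0: "\<not> sim x p0" and xi: "\<not> sim x pinf" using u unfolding is_unit_def by simp_all
  let ?a = "alpha U p0 pinf x"
  have aU: "?a \<in> U pinf" and ap: "?a p0 = x" using alpha_prop[OF L b xi] by simp_all
  have ainj: "inj ?a" using lm_bij[OF L aU] by (rule bij_is_inj)
  have x0': "\<not> sim p0 x" by (rule lm_nsym[OF L x0])
  obtain g1 h1 where g1: "g1 \<in> U p0" and h1: "h1 \<in> U p0" and e1: "m1 = h1 \<circ> ?a \<circ> g1"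
    and m1a: "m1 p0 = pinf" and m1b: "m1 pinf = p0" using m1 unfolding MP_def by (elim conjE bexE) (rule that)
  obtain g2 h2 where g2: "g2 \<in> U p0" and h2: "h2 \<in> U p0" and e2: "m2 = h2 \<circ> ?a \<circ> g2"
    and m2a: "m2 p0 = pinf" and m2b: "m2 pinf = p0" using m2 unfolding MP_def by (elim conjE bexE) (rule that)
  have "h1 x = pinf" using m1a e1 lm_fix[OF L g1] ap by simp
  moreover have "h2 x = pinf" using m2a e2 lm_fix[OF L g2] ap by simp
  ultimately have hh: "h1 = h2" using lm_unique[OF L h1 h2 x0'] by simp
  have "h1 (?a (g1 pinf)) = h1 p0" using m1b e1 lm_fix[OF L h1] by simp
  hence q1: "?a (g1 pinf) = p0" using bij_is_inj[OF lm_bij[OF L h1]] by (simp add: inj_eq)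
  have "h2 (?a (g2 pinf)) = h2 p0" using m2b e2 lm_fix[OF L h2] by simp
  hence q2: "?a (g2 pinf) = p0" using bij_is_inj[OF lm_bij[OF L h2]] by (simp add: inj_eq)
  have "?a (g1 pinf) = ?a (g2 pinf)" using q1 q2 by simp
  hence "g1 pinf = g2 pinf" by (rule injD[OF ainj])
  hence "g1 = g2" using lm_unique[OF L g1 g2 b] by simp
  thus ?thesis using hh e1 e2 by simp
qed

lemma mu_ex1:
  assumes L: "local_moufang sim U" and b: "\<not> sim p0 pinf" and u: "is_unit sim p0 pinf x"
  shows "\<exists>!m. MP U p0 pinf x m"
  using mu_exists[OF L b u] mu_unique[OF L b u] by (intro ex_ex1I)

lemma mu_prop:
  assumes L: "local_moufang sim U" and b: "\<not> sim p0 pinf" and u: "is_unit sim p0 pinf x"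
  shows "MP U p0 pinf x (mu U p0 pinf x)"
proof -
  have "MP U p0 pinf x (THE m. MP U p0 pinf x m)" by (rule theI'[OF mu_ex1[OF L b u]])
  thus ?thesis unfolding mu_def MP_def by simp
qed

lemma mu_eq:
  assumes L: "local_moufang sim U" and b: "\<not> sim p0 pinf" and u: "is_unit sim p0 pinf x"
    and m: "MP U p0 pinf x m"
  shows "mu U p0 pinf x = m"
  by (rule mu_unique[OF L b u mu_prop[OF L b u] m])

lemma mu_bij_pres:
  assumes L: "local_moufang sim U" and b: "\<not> sim p0 pinf" and u: "is_unit sim p0 pinf x"
  shows "bij (mu U p0 pinf x) \<and> (\<forall>c d. sim c d \<longleftrightarrow> sim (mu U p0 pinf x c) (mu U p0 pinf x d))"
proof -
  have xi: "\<not> sim x pinf" using u unfolding is_unit_def by simp_all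
  let ?a = "alpha U p0 pinf x"
  have aU: "?a \<in> U pinf" using alpha_prop[OF L b xi] by simp
  obtain g h where g: "g \<in> U p0" and h: "h \<in> U p0" and e: "mu U p0 pinf x = h \<circ> ?a \<circ> g"
    using mu_prop[OF L b u] unfolding MP_def by (elim conjE bexE) (rule that)
  have "bij (h \<circ> ?a \<circ> g)" using lm_bij[OF L g] lm_bij[OF L h] lm_bij[OF L aU] by (simp add: bij_comp)
  moreover have "\<forall>c d. sim c d \<longleftrightarrow> sim ((h \<circ> ?a \<circ> g) c) ((h \<circ> ?a \<circ> g) d)"
  proof (intro allI)
    fix c d
    have "sim c d = sim (g c) (g d)" by (rule lm_pres[OF L g])
    also have "\<dots> = sim (?a (g c)) (?a (g d))" by (rule lm_pres[OF L aU])
    also have "\<dots> = sim (h (?a (g c))) (h (?a (g d)))" by (rule lm_pres[OF L h])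
    finally show "sim c d \<longleftrightarrow> sim ((h \<circ> ?a \<circ> g) c) ((h \<circ> ?a \<circ> g) d)" by simp
  qed
  ultimately show ?thesis using e by simp
qed

lemma hom_nsim: "lm_hom sim1 U sim2 V phi \<Longrightarrow> \<not> sim1 a b \<Longrightarrow> \<not> sim2 (phi a) (phi b)"
  using hom_sim by metis

lemma hom_alpha:
  assumes hom: "lm_hom sim1 U sim2 V phi" and b: "\<not> sim1 p0 pinf" and x: "\<not> sim1 x pinf"
  shows "theta U V phi pinf (alpha U p0 pinf x) = alpha V (phi p0) (phi pinf) (phi x)"
proof -
  note L1 = hom_L1[OF hom] and L2 = hom_L2[OF hom]
  have aU: "alpha U p0 pinf x \<in> U pinf" and ap: "alpha U p0 pinf x p0 = x"
    using alpha_prop[OF L1 b x] by simp_all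
  have m: "theta U V phi pinf (alpha U p0 pinf x) \<in> V (phi pinf)" by (rule theta_mem[OF hom aU])
  have "theta U V phi pinf (alpha U p0 pinf x) (phi p0) = phi x"
    using theta_eq[OF hom aU, of p0] ap by simp
  thus ?thesis by (rule alpha_uniq[OF L2 hom_nsim[OF hom b] hom_nsim[OF hom x] m])
qed

lemma hom_neg:
  assumes hom: "lm_hom sim1 U sim2 V phi" and b: "\<not> sim1 p0 pinf" and x: "\<not> sim1 x pinf"
  shows "phi (neg U p0 pinf x) = neg V (phi p0) (phi pinf) (phi x)"
proof -
  note L1 = hom_L1[OF hom] and L2 = hom_L2[OF hom]
  let ?a = "alpha U p0 pinf x"
  let ?b = "alpha V (phi p0) (phi pinf) (phi x)"
  have aU: "?a \<in> U pinf" using alpha_prop[OF L1 b x] by simp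
  have bV: "?b \<in> V (phi pinf)" using alpha_prop[OF L2 hom_nsim[OF hom b] hom_nsim[OF hom x]] by simp
  have binj: "inj ?b" by (rule bij_is_inj[OF lm_bij[OF L2 bV]])
  have an: "?a (neg U p0 pinf x) = p0" by (rule neg_alpha[OF L1 b x])
  have "phi (?a (neg U p0 pinf x)) = ?b (phi (neg U p0 pinf x))"
    using theta_eq[OF hom aU] hom_alpha[OF hom b x] by simp
  hence "phi p0 = ?b (phi (neg U p0 pinf x))" using an by simp
  hence "?b (phi (neg U p0 pinf x)) = phi p0" by (rule sym)
  hence "inv ?b (phi p0) = phi (neg U p0 pinf x)" by (rule inv_f_eq[OF binj])
  thus ?thesis unfolding neg_def by simp
qed

lemma hom_unit:
  assumes hom: "lm_hom sim1 U sim2 V phi" and u: "is_unit sim1 p0 pinf x"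
  shows "is_unit sim2 (phi p0) (phi pinf) (phi x)"
  using u hom_nsim[OF hom] unfolding is_unit_def by metis

lemma hom_mu:
  assumes hom: "lm_hom sim1 U sim2 V phi" and b: "\<not> sim1 p0 pinf" and u: "is_unit sim1 p0 pinf x"
    and g: "g \<in> U p0" and h: "h \<in> U p0" and e: "mu U p0 pinf x = h \<circ> alpha U p0 pinf x \<circ> g"
  shows "mu V (phi p0) (phi pinf) (phi x) =
           theta U V phi p0 h \<circ> alpha V (phi p0) (phi pinf) (phi x) \<circ> theta U V phi p0 g
    \<and> phi \<circ> mu U p0 pinf x = mu V (phi p0) (phi pinf) (phi x) \<circ> phi"
proof -
  note L1 = hom_L1[OF hom] and L2 = hom_L2[OF hom]
  have xi: "\<not> sim1 x pinf" using u unfolding is_unit_def by simp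
  let ?a = "alpha U p0 pinf x"
  let ?b = "alpha V (phi p0) (phi pinf) (phi x)"
  let ?m = "theta U V phi p0 h \<circ> ?b \<circ> theta U V phi p0 g"
  have aU: "?a \<in> U pinf" using alpha_prop[OF L1 b xi] by simp
  have pt: "?m (phi z) = phi (mu U p0 pinf x z)" for z
  proof -
    have "?m (phi z) = theta U V phi p0 h (?b (phi (g z)))" using theta_eq[OF hom g, of z] by simp
    also have "\<dots> = theta U V phi p0 h (phi (?a (g z)))"
      using theta_eq[OF hom aU, of "g z"] hom_alpha[OF hom b xi] by simp
    also have "\<dots> = phi (h (?a (g z)))" using theta_eq[OF hom h, of "?a (g z)"] by simp
    finally show ?thesis using e by simp
  qed
  have MP1: "MP U p0 pinf x (mu U p0 pinf x)" by (rule mu_prop[OF L1 b u])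
  have "MP V (phi p0) (phi pinf) (phi x) ?m"
    unfolding MP_def
  proof (intro conjI)
    show "\<exists>g'\<in>V (phi p0). \<exists>h'\<in>V (phi p0). ?m = h' \<circ> ?b \<circ> g'"
      using theta_mem[OF hom g] theta_mem[OF hom h] by blast
    show "?m (phi p0) = phi pinf" using pt[of p0] MP1 unfolding MP_def by simp
    show "?m (phi pinf) = phi p0" using pt[of pinf] MP1 unfolding MP_def by simp
  qed
  hence mm: "mu V (phi p0) (phi pinf) (phi x) = ?m"
    by (rule mu_eq[OF L2 hom_nsim[OF hom b] hom_unit[OF hom u]])
  moreover have "phi \<circ> mu U p0 pinf x = mu V (phi p0) (phi pinf) (phi x) \<circ> phi"
    using pt mm by (simp add: fun_eq_iff)
  ultimately show ?thesis by (rule conjI)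
qed

lemma hom_mu2:
  assumes hom: "lm_hom sim1 U sim2 V phi" and b: "\<not> sim1 p0 pinf" and u: "is_unit sim1 p0 pinf x"
  shows "phi \<circ> mu U p0 pinf x = mu V (phi p0) (phi pinf) (phi x) \<circ> phi"
proof -
  obtain g h where g: "g \<in> U p0" and h: "h \<in> U p0" and e: "mu U p0 pinf x = h \<circ> alpha U p0 pinf x \<circ> g"
    using mu_prop[OF hom_L1[OF hom] b u] unfolding MP_def by (elim conjE bexE) (rule that)
  show ?thesis using hom_mu[OF hom b u g h e] by (rule conjunct2)
qed

lemma hom_tilde:
  assumes hom: "lm_hom sim1 U sim2 V phi" and b: "\<not> sim1 p0 pinf" and u: "is_unit sim1 p0 pinf x"
  shows "phi (tilde U p0 pinf x) = tilde V (phi p0) (phi pinf) (phi x)"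
proof -
  note L1 = hom_L1[OF hom]
  have xi: "\<not> sim1 x pinf" using u unfolding is_unit_def by simp
  let ?w = "neg U p0 pinf x"
  let ?mu = "mu U p0 pinf x"
  have wu: "is_unit sim1 p0 pinf ?w" by (rule neg_unit[OF L1 b u])
  hence w0: "\<not> sim1 ?w p0" unfolding is_unit_def by simp
  have MP1: "MP U p0 pinf x ?mu" by (rule mu_prop[OF L1 b u])
  hence m0: "?mu p0 = pinf" unfolding MP_def by simp
  have "sim1 ?w p0 = sim1 (?mu ?w) (?mu p0)" using mu_bij_pres[OF L1 b u] by simp
  hence nm: "\<not> sim1 (?mu ?w) pinf" using w0 m0 by simp
  have "phi (tilde U p0 pinf x) = neg V (phi p0) (phi pinf) (phi (?mu ?w))"
    unfolding tilde_def by (rule hom_neg[OF hom b nm])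
  also have "phi (?mu ?w) = mu V (phi p0) (phi pinf) (phi x) (phi ?w)"
    using hom_mu2[OF hom b u] by (simp add: fun_eq_iff)
  also have "phi ?w = neg V (phi p0) (phi pinf) (phi x)" by (rule hom_neg[OF hom b xi])
  finally show ?thesis unfolding tilde_def .
qed

lemma hom_hua:
  assumes hom: "lm_hom sim1 U sim2 V phi" and b: "\<not> sim1 p0 pinf"
    and hg: "h \<in> hua sim1 U p0 pinf"
  shows "bij h \<and> (\<exists>h'\<in>hua sim2 V (phi p0) (phi pinf). bij h' \<and> phi \<circ> h = h' \<circ> phi)"
  using hg unfolding hua_def
proof (induction h rule: gen.induct)
  case gen_id
  show ?case by (intro conjI bij_id bexI[where x=id] gen.gen_id) simp
next
  case (gen_base g)
  then obtain x y where x: "is_unit sim1 p0 pinf x" and y: "is_unit sim1 p0 pinf y"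
    and e: "g = mu U p0 pinf y \<circ> mu U p0 pinf x" by blast
  note L1 = hom_L1[OF hom] and L2 = hom_L2[OF hom]
  have b2: "\<not> sim2 (phi p0) (phi pinf)" by (rule hom_nsim[OF hom b])
  let ?g = "mu V (phi p0) (phi pinf) (phi y) \<circ> mu V (phi p0) (phi pinf) (phi x)"
  have bg: "bij g" using e mu_bij_pres[OF L1 b x] mu_bij_pres[OF L1 b y] by (simp add: bij_comp)
  have bg': "bij ?g" using mu_bij_pres[OF L2 b2 hom_unit[OF hom x]] mu_bij_pres[OF L2 b2 hom_unit[OF hom y]]
    by (simp add: bij_comp)
  have mem: "?g \<in> gen {mu V (phi p0) (phi pinf) y' \<circ> mu V (phi p0) (phi pinf) x' | x' y'.
      is_unit sim2 (phi p0) (phi pinf) x' \<and> is_unit sim2 (phi p0) (phi pinf) y'}"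
    using hom_unit[OF hom x] hom_unit[OF hom y] by (intro gen.gen_base) blast
  have c: "phi \<circ> g = ?g \<circ> phi"
    using e hom_mu2[OF hom b x] hom_mu2[OF hom b y] by (simp add: fun_eq_iff)
  show ?case using bg bg' mem c unfolding hua_def by blast
next
  case (gen_mult g h)
  from gen_mult.IH[folded hua_def] obtain g' h' where bg: "bij g" and bh: "bij h"
    and g': "g' \<in> hua sim2 V (phi p0) (phi pinf)" "bij g'" "phi \<circ> g = g' \<circ> phi"
    and h': "h' \<in> hua sim2 V (phi p0) (phi pinf)" "bij h'" "phi \<circ> h = h' \<circ> phi" by blast
  have "h' \<circ> g' \<in> hua sim2 V (phi p0) (phi pinf)" using g'(1) h'(1) unfolding hua_def by (rule gen.gen_mult)
  moreover have "phi \<circ> (h \<circ> g) = (h' \<circ> g') \<circ> phi" using g'(3) h'(3) by (metis comp_assoc)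
  ultimately show ?case using bg bh g'(2) h'(2) unfolding hua_def by (meson bij_comp)
next
  case (gen_inv g)
  from gen_inv.IH[folded hua_def] obtain g' where bg: "bij g"
    and g': "g' \<in> hua sim2 V (phi p0) (phi pinf)" "bij g'" "phi \<circ> g = g' \<circ> phi" by blast
  have "inv g' \<in> hua sim2 V (phi p0) (phi pinf)" using g'(1) unfolding hua_def by (rule gen.gen_inv)
  moreover have "phi \<circ> inv g = inv g' \<circ> phi"
  proof (rule ext)
    fix z
    have "g' (phi (inv g z)) = phi (g (inv g z))" using g'(3) by (metis comp_apply)
    also have "\<dots> = phi z" using bg by (simp add: bij_is_surj surj_f_inv_f)
    finally have "inv g' (phi z) = phi (inv g z)" by (rule inv_f_eq[OF bij_is_inj[OF g'(2)]])
    thus "(phi \<circ> inv g) z = (inv g' \<circ> phi) z" by simp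
  qed
  ultimately show ?case using bg g'(2) unfolding hua_def by (meson bij_imp_bij_inv)
qed


theorem mainTheorem8:
  fixes sim1 :: "'a \<Rightarrow> 'a \<Rightarrow> bool" and U :: "'a \<Rightarrow> ('a \<Rightarrow> 'a) set"
    and sim2 :: "'b \<Rightarrow> 'b \<Rightarrow> bool" and V :: "'b \<Rightarrow> ('b \<Rightarrow> 'b) set"
    and phi :: "'a \<Rightarrow> 'b"
  assumes hom: "lm_hom sim1 U sim2 V phi"
  shows
    "(\<forall>x. (\<exists>!th. theta_prop U V phi x th) \<and> theta_prop U V phi x (theta U V phi x) \<and>
         (\<forall>u1\<in>U x. \<forall>u2\<in>U x. theta U V phi x (u2 \<circ> u1) = theta U V phi x u2 \<circ> theta U V phi x u1))
   \<and> (\<forall>x. \<forall>u\<in>U x. \<forall>v\<in>V (phi x). \<forall>x'. \<not> sim1 x x' \<longrightarrow> phi (u x') = v (phi x')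
         \<longrightarrow> v = theta U V phi x u)
   \<and> (\<forall>p0 pinf q0 qinf. \<not> sim1 p0 pinf \<longrightarrow> \<not> sim2 q0 qinf \<longrightarrow> phi p0 = q0 \<longrightarrow> phi pinf = qinf \<longrightarrow>
       (\<forall>x. \<not> sim1 x pinf \<longrightarrow>
          theta U V phi pinf (alpha U p0 pinf x) = alpha V q0 qinf (phi x) \<and>
          phi (neg U p0 pinf x) = neg V q0 qinf (phi x))
     \<and> (\<forall>x. is_unit sim1 p0 pinf x \<longrightarrow>
          is_unit sim2 q0 qinf (phi x) \<and>
          phi \<circ> mu U p0 pinf x = mu V q0 qinf (phi x) \<circ> phi \<and>
          (\<forall>g\<in>U p0. \<forall>h\<in>U p0. mu U p0 pinf x = h \<circ> alpha U p0 pinf x \<circ> g \<longrightarrow>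
             mu V q0 qinf (phi x) = theta U V phi p0 h \<circ> alpha V q0 qinf (phi x) \<circ> theta U V phi p0 g))
     \<and> (\<forall>x. is_unit sim1 p0 pinf x \<longrightarrow> phi (tilde U p0 pinf x) = tilde V q0 qinf (phi x))
     \<and> (\<forall>h\<in>hua sim1 U p0 pinf. \<exists>h'\<in>hua sim2 V q0 qinf. phi \<circ> h = h' \<circ> phi))"
proof -
  note L1 = hom_L1[OF hom] and L2 = hom_L2[OF hom]
  have P1: "\<forall>x. (\<exists>!th. theta_prop U V phi x th) \<and> theta_prop U V phi x (theta U V phi x) \<and>
         (\<forall>u1\<in>U x. \<forall>u2\<in>U x. theta U V phi x (u2 \<circ> u1) = theta U V phi x u2 \<circ> theta U V phi x u1)"
  proof (intro allI conjI ballI)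
    fix x
    show "\<exists>!th. theta_prop U V phi x th" by (rule theta_ex[OF hom])
    show "theta_prop U V phi x (theta U V phi x)" by (rule theta_prop_th[OF hom])
    fix u1 u2 assume "u1 \<in> U x" "u2 \<in> U x"
    thus "theta U V phi x (u2 \<circ> u1) = theta U V phi x u2 \<circ> theta U V phi x u1" by (rule theta_hom[OF hom])
  qed
  have P2: "\<forall>x. \<forall>u\<in>U x. \<forall>v\<in>V (phi x). \<forall>x'. \<not> sim1 x x' \<longrightarrow> phi (u x') = v (phi x')
         \<longrightarrow> v = theta U V phi x u"
  proof (intro allI ballI impI)
    fix x u v x' assume "u \<in> U x" "v \<in> V (phi x)" "\<not> sim1 x x'" "phi (u x') = v (phi x')"
    thus "v = theta U V phi x u" by (rule theta_char[OF hom])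
  qed
  have P3: "\<forall>p0 pinf q0 qinf. \<not> sim1 p0 pinf \<longrightarrow> \<not> sim2 q0 qinf \<longrightarrow> phi p0 = q0 \<longrightarrow> phi pinf = qinf \<longrightarrow>
       (\<forall>x. \<not> sim1 x pinf \<longrightarrow>
          theta U V phi pinf (alpha U p0 pinf x) = alpha V q0 qinf (phi x) \<and>
          phi (neg U p0 pinf x) = neg V q0 qinf (phi x))
     \<and> (\<forall>x. is_unit sim1 p0 pinf x \<longrightarrow>
          is_unit sim2 q0 qinf (phi x) \<and>
          phi \<circ> mu U p0 pinf x = mu V q0 qinf (phi x) \<circ> phi \<and>
          (\<forall>g\<in>U p0. \<forall>h\<in>U p0. mu U p0 pinf x = h \<circ> alpha U p0 pinf x \<circ> g \<longrightarrow>
             mu V q0 qinf (phi x) = theta U V phi p0 h \<circ> alpha V q0 qinf (phi x) \<circ> theta U V phi p0 g))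
     \<and> (\<forall>x. is_unit sim1 p0 pinf x \<longrightarrow> phi (tilde U p0 pinf x) = tilde V q0 qinf (phi x))
     \<and> (\<forall>h\<in>hua sim1 U p0 pinf. \<exists>h'\<in>hua sim2 V q0 qinf. phi \<circ> h = h' \<circ> phi)"
  proof (intro allI impI)
    fix p0 pinf q0 qinf
    assume b: "\<not> sim1 p0 pinf" and "\<not> sim2 q0 qinf" and q0: "phi p0 = q0" and qi: "phi pinf = qinf"
    show "(\<forall>x. \<not> sim1 x pinf \<longrightarrow>
          theta U V phi pinf (alpha U p0 pinf x) = alpha V q0 qinf (phi x) \<and>
          phi (neg U p0 pinf x) = neg V q0 qinf (phi x))
     \<and> (\<forall>x. is_unit sim1 p0 pinf x \<longrightarrow>
          is_unit sim2 q0 qinf (phi x) \<and>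
          phi \<circ> mu U p0 pinf x = mu V q0 qinf (phi x) \<circ> phi \<and>
          (\<forall>g\<in>U p0. \<forall>h\<in>U p0. mu U p0 pinf x = h \<circ> alpha U p0 pinf x \<circ> g \<longrightarrow>
             mu V q0 qinf (phi x) = theta U V phi p0 h \<circ> alpha V q0 qinf (phi x) \<circ> theta U V phi p0 g))
     \<and> (\<forall>x. is_unit sim1 p0 pinf x \<longrightarrow> phi (tilde U p0 pinf x) = tilde V q0 qinf (phi x))
     \<and> (\<forall>h\<in>hua sim1 U p0 pinf. \<exists>h'\<in>hua sim2 V q0 qinf. phi \<circ> h = h' \<circ> phi)"
      unfolding q0[symmetric] qi[symmetric]
    proof (intro conjI allI impI ballI)
      fix x assume x: "\<not> sim1 x pinf"
      show "theta U V phi pinf (alpha U p0 pinf x) = alpha V (phi p0) (phi pinf) (phi x)"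
        by (rule hom_alpha[OF hom b x])
      show "phi (neg U p0 pinf x) = neg V (phi p0) (phi pinf) (phi x)"
        by (rule hom_neg[OF hom b x])
    next
      fix x assume u: "is_unit sim1 p0 pinf x"
      show "is_unit sim2 (phi p0) (phi pinf) (phi x)" by (rule hom_unit[OF hom u])
      show "phi \<circ> mu U p0 pinf x = mu V (phi p0) (phi pinf) (phi x) \<circ> phi" by (rule hom_mu2[OF hom b u])
      fix g h assume g: "g \<in> U p0" and h: "h \<in> U p0" and e: "mu U p0 pinf x = h \<circ> alpha U p0 pinf x \<circ> g"
      show "mu V (phi p0) (phi pinf) (phi x) = theta U V phi p0 h \<circ> alpha V (phi p0) (phi pinf) (phi x) \<circ> theta U V phi p0 g"
        using hom_mu[OF hom b u g h e] by (rule conjunct1)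
    next
      fix x assume u: "is_unit sim1 p0 pinf x"
      show "phi (tilde U p0 pinf x) = tilde V (phi p0) (phi pinf) (phi x)" by (rule hom_tilde[OF hom b u])
    next
      fix h assume "h \<in> hua sim1 U p0 pinf"
      from hom_hua[OF hom b this] show "\<exists>h'\<in>hua sim2 V (phi p0) (phi pinf). phi \<circ> h = h' \<circ> phi" by blast
    qed
  qed
  show ?thesis using P1 P2 P3 by (intro conjI)
qed

end
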